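(* Let $n\ge 3$, $u>0$, and let $S=[A_0,\dots,A_n]$ be an $n$-simplex with $\|A_i-A_0\|^2=v_i$ for $1\le i\le n$ and $\|A_i-A_j\|^2=u$ for $1\le i<j\le n$ (denoted $PK[n;u;v_1,\dots,v_n]$). Then its Cayley–Menger determinant is $$\mathcal{C}(S)=(-u)^{n-2}\Big[n(u^2+v_1^2+\cdots+v_n^2)-(u+v_1+\cdots+v_n)^2\Big],$$ and its inner Cayley–Menger determinant is $$\mathcal{D}(S)=(-u)^{n-1}\Big[(n-1)(v_1^2+\cdots+v_n^2)-(v_1+\cdots+v_n)^2\Big].$$
   Context: An $n$-simplex is the convex hull $[A_0,\dots,A_n]$ of $n+1$ affinely independent points in a Euclidean space. With $a_{i,j}=\|A_i-A_j\|^2$, the Cayley–Menger determinant $\mathcal{C}(S)$ is the $(n+2)\times(n+2)$ determinant with rows and columns indexed by $-1,0,\dots,n$, whose entries are $c_{i,i}=0$, $c_{-1,j}=c_{j,-1}=1$ for $j\ne -1$, and $c_{i,j}=a_{i,j}$ otherwise. The inner Cayley–Menger determinant $\mathcal{D}(S)$ is the $(n+1)\times(n+1)$ determinant $\det(a_{i,j})_{0\le i,j\le n}$ (i.e. $\mathcal{C}(S)$ with its first row and first column deleted). *)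

theory Defs
  imports "HOL-Analysis.Analysis" "Jordan_Normal_Form.Determinant"
begin

definition is_simplex :: "nat \<Rightarrow> (nat \<Rightarrow> 'a::euclidean_space) \<Rightarrow> bool" where
  "is_simplex n A \<longleftrightarrow> inj_on A {0..n} \<and> \<not> affine_dependent (A ` {0..n})"

text \<open>Cayley-Menger matrix; row/column 0 corresponds to index -1 of the paper,
  row/column k+1 corresponds to vertex A k.\<close>
definition cm_matrix :: "nat \<Rightarrow> (nat \<Rightarrow> 'a::euclidean_space) \<Rightarrow> real Matrix.mat" where
  "cm_matrix n A = Matrix.mat (n+2) (n+2)
     (\<lambda>(i,j). if i = j then 0 else if i = 0 \<or> j = 0 then 1
              else (dist (A (i-1)) (A (j-1)))^2)"

definition cayley_menger :: "nat \<Rightarrow> (nat \<Rightarrow> 'a::euclidean_space) \<Rightarrow> real" where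
  "cayley_menger n A = Determinant.det (cm_matrix n A)"

definition inner_cm_matrix :: "nat \<Rightarrow> (nat \<Rightarrow> 'a::euclidean_space) \<Rightarrow> real Matrix.mat" where
  "inner_cm_matrix n A = Matrix.mat (n+1) (n+1) (\<lambda>(i,j). (dist (A i) (A j))^2)"

definition inner_cayley_menger :: "nat \<Rightarrow> (nat \<Rightarrow> 'a::euclidean_space) \<Rightarrow> real" where
  "inner_cayley_menger n A = Determinant.det (inner_cm_matrix n A)"

end

theory Submission
  imports Defs
begin

lemma sylvester_det:
  fixes U :: "'a::field mat"
  assumes U: "U \<in> carrier_mat N k" and V: "V \<in> carrier_mat k N" and c: "c \<noteq> 0" and kN: "k \<le> N"
  shows "det (c \<cdot>\<^sub>m 1\<^sub>m N + U * V) = c^(N-k) * det (c \<cdot>\<^sub>m 1\<^sub>m k + V * U)"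
proof -
  define X where "X = four_block_mat (c \<cdot>\<^sub>m 1\<^sub>m N) U (- V) (1\<^sub>m k)"
  define Y where "Y = four_block_mat (1\<^sub>m N) (0\<^sub>m N k) V (1\<^sub>m k)"
  define Z where "Z = four_block_mat (1\<^sub>m N) (- U) (0\<^sub>m k N) (c \<cdot>\<^sub>m 1\<^sub>m k)"
  have UV: "U * V \<in> carrier_mat N N" and VU: "V * U \<in> carrier_mat k k" using U V by auto
  have X: "X \<in> carrier_mat (N+k) (N+k)" unfolding X_def using U V by auto
  have Y: "Y \<in> carrier_mat (N+k) (N+k)" unfolding Y_def using U V by auto
  have Z: "Z \<in> carrier_mat (N+k) (N+k)" unfolding Z_def using U V by auto
  have XY: "X * Y = four_block_mat (c \<cdot>\<^sub>m 1\<^sub>m N + U * V) U (0\<^sub>m k N) (1\<^sub>m k)"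
    unfolding X_def Y_def
    by (subst mult_four_block_mat[of _ N N _ k _ k _ _ N _ k], insert U V, auto)
  have XZ: "X * Z = four_block_mat (c \<cdot>\<^sub>m 1\<^sub>m N) (0\<^sub>m N k) (- V) (c \<cdot>\<^sub>m 1\<^sub>m k + V * U)"
  proof -
    have XZ0: "X * Z = four_block_mat (c \<cdot>\<^sub>m 1\<^sub>m N * 1\<^sub>m N + U * 0\<^sub>m k N) (c \<cdot>\<^sub>m 1\<^sub>m N * - U + U * (c \<cdot>\<^sub>m 1\<^sub>m k))
       (- V * 1\<^sub>m N + 1\<^sub>m k * 0\<^sub>m k N) (- V * - U + 1\<^sub>m k * (c \<cdot>\<^sub>m 1\<^sub>m k))"
      unfolding X_def Z_def
      by (rule mult_four_block_mat, insert U V, auto)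
    have h1: "c \<cdot>\<^sub>m 1\<^sub>m N * 1\<^sub>m N + U * 0\<^sub>m k N = c \<cdot>\<^sub>m 1\<^sub>m N"
    proof -
      have "c \<cdot>\<^sub>m 1\<^sub>m N * 1\<^sub>m N = c \<cdot>\<^sub>m 1\<^sub>m N"
        by (rule right_mult_one_mat[of _ N N]) simp
      moreover have "U * 0\<^sub>m k N = 0\<^sub>m N N" by (rule right_mult_zero_mat[OF U])
      ultimately show ?thesis by (metis right_add_zero_mat smult_carrier_mat one_carrier_mat)
    qed
    have h2: "c \<cdot>\<^sub>m 1\<^sub>m N * - U + U * (c \<cdot>\<^sub>m 1\<^sub>m k) = 0\<^sub>m N k"
    proof -
      have e1: "c \<cdot>\<^sub>m 1\<^sub>m N * - U = c \<cdot>\<^sub>m (1\<^sub>m N * - U)"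
        by (rule mult_smult_assoc_mat) (use U in auto)
      have e2: "1\<^sub>m N * - U = - U" by (rule left_mult_one_mat) (use U in auto)
      have e3: "c \<cdot>\<^sub>m (- U) = - (c \<cdot>\<^sub>m U)" by (rule eq_matI) auto
      have e4: "U * (c \<cdot>\<^sub>m 1\<^sub>m k) = c \<cdot>\<^sub>m (U * 1\<^sub>m k)"
        by (rule mult_smult_distrib) (use U in auto)
      have e5: "U * 1\<^sub>m k = U" by (rule right_mult_one_mat[OF U])
      have cU: "c \<cdot>\<^sub>m U \<in> carrier_mat N k" using U by simp
      show ?thesis unfolding e1 e2 e3 e4 e5 by (rule uminus_l_inv_mat[OF cU])
    qed
    have h3: "- V * 1\<^sub>m N + 1\<^sub>m k * 0\<^sub>m k N = - V" proof -
      have "- V * 1\<^sub>m N = - V" by (rule right_mult_one_mat[of _ k N]) (use V in simp)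
      moreover have "1\<^sub>m k * 0\<^sub>m k N = (0\<^sub>m k N :: 'a mat)" by (rule left_mult_one_mat[of _ k N]) simp
      ultimately show ?thesis by (metis right_add_zero_mat uminus_carrier_mat V)
    qed
    have h4: "- V * - U + 1\<^sub>m k * (c \<cdot>\<^sub>m 1\<^sub>m k) = c \<cdot>\<^sub>m 1\<^sub>m k + V * U"
    proof -
      have e1: "- V * - U = V * U" using U V by simp
      have e2: "1\<^sub>m k * (c \<cdot>\<^sub>m 1\<^sub>m k) = c \<cdot>\<^sub>m 1\<^sub>m k" by (rule left_mult_one_mat[of _ k k]) simp
      show ?thesis unfolding e1 e2 by (rule comm_add_mat[OF VU]) simp
    qed
    show ?thesis using XZ0 unfolding h1 h2 h3 h4 .
  qed
  have dY: "det Y = 1" unfolding Y_def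
    by (subst det_four_block_mat_upper_right_zero[of _ N _ k], insert V, auto)
  have dZ: "det Z = c ^ k" unfolding Z_def
    by (subst det_four_block_mat_lower_left_zero[of _ N _ k], insert U, auto)
  have dXY: "det (X * Y) = det (c \<cdot>\<^sub>m 1\<^sub>m N + U * V)" unfolding XY
    by (subst det_four_block_mat_lower_left_zero[of _ N _ k], insert U UV, auto)
  have dXZ: "det (X * Z) = c ^ N * det (c \<cdot>\<^sub>m 1\<^sub>m k + V * U)" unfolding XZ
    by (subst det_four_block_mat_upper_right_zero[of _ N _ k], insert V VU, auto)
  have "det X = det (c \<cdot>\<^sub>m 1\<^sub>m N + U * V)" using dXY det_mult[OF X Y] dY by simp
  moreover have "det X * c ^ k = c ^ N * det (c \<cdot>\<^sub>m 1\<^sub>m k + V * U)" using dXZ det_mult[OF X Z] dZ by simp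
  moreover have "c ^ N = c ^ (N - k) * c ^ k" using kN by (simp add: power_add[symmetric])
  ultimately show ?thesis using c by auto
qed

lemma mat_delete_mat: "i < n \<Longrightarrow> j < n \<Longrightarrow> mat_delete (Matrix.mat n n f) i j =
   Matrix.mat (n-1) (n-1) (\<lambda>(a,b). f (insert_index i a, insert_index j b))"
  unfolding mat_delete_def by (rule eq_matI) (auto simp: insert_index_def)

lemma det_mat_expand: fixes f :: "nat \<times> nat \<Rightarrow> 'a::comm_ring_1"
  shows "det (Matrix.mat (Suc n) (Suc n) f) = (\<Sum>i<Suc n. f (i,0) * ((-1)^i *
     det (Matrix.mat n n (\<lambda>(a,b). f (insert_index i a, Suc b)))))"
proof -
  have "det (Matrix.mat (Suc n) (Suc n) f) = (\<Sum>i<Suc n. Matrix.mat (Suc n) (Suc n) f $$ (i,0) * cofactor (Matrix.mat (Suc n) (Suc n) f) i 0)"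
    by (rule laplace_expansion_column) auto
  also have "\<dots> = (\<Sum>i<Suc n. f (i,0) * ((-1)^i *
     det (Matrix.mat n n (\<lambda>(a,b). f (insert_index i a, Suc b)))))"
    by (rule sum.cong) (auto simp: cofactor_def mat_delete_mat insert_index_def)
  finally show ?thesis .
qed

lemma det1: "det (Matrix.mat (Suc 0) (Suc 0) f) = f (0,0)"
  by (subst det_single) auto

lemma det2: fixes f :: "nat \<times> nat \<Rightarrow> 'a::comm_ring_1"
  shows "det (Matrix.mat 2 2 f) = f(0,0)*f(1,1) - f(1,0)*f(0,1)"
  using det_mat_expand[of 1 f] by (simp add: det1 insert_index_def numeral_2_eq_2)

lemma det3: fixes f :: "nat \<times> nat \<Rightarrow> 'a::comm_ring_1"
  shows "det (Matrix.mat 3 3 f) = f(0,0)*(f(1,1)*f(2,2) - f(2,1)*f(1,2))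
     - f(1,0)*(f(0,1)*f(2,2) - f(2,1)*f(0,2)) + f(2,0)*(f(0,1)*f(1,2) - f(1,1)*f(0,2))"
  using det_mat_expand[of 2 f] by (simp add: det2[unfolded numeral_2_eq_2] insert_index_def numeral_3_eq_3 numeral_2_eq_2 algebra_simps)

lemma det4: fixes f :: "nat \<times> nat \<Rightarrow> 'a::comm_ring_1"
  shows "det (Matrix.mat 4 4 f) =
     f(0,0) * (f(1,1)*(f(2,2)*f(3,3) - f(3,2)*f(2,3)) - f(2,1)*(f(1,2)*f(3,3) - f(3,2)*f(1,3)) + f(3,1)*(f(1,2)*f(2,3) - f(2,2)*f(1,3)))
   - f(1,0) * (f(0,1)*(f(2,2)*f(3,3) - f(3,2)*f(2,3)) - f(2,1)*(f(0,2)*f(3,3) - f(3,2)*f(0,3)) + f(3,1)*(f(0,2)*f(2,3) - f(2,2)*f(0,3)))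
   + f(2,0) * (f(0,1)*(f(1,2)*f(3,3) - f(3,2)*f(1,3)) - f(1,1)*(f(0,2)*f(3,3) - f(3,2)*f(0,3)) + f(3,1)*(f(0,2)*f(1,3) - f(1,2)*f(0,3)))
   - f(3,0) * (f(0,1)*(f(1,2)*f(2,3) - f(2,2)*f(1,3)) - f(1,1)*(f(0,2)*f(2,3) - f(2,2)*f(0,3)) + f(2,1)*(f(0,2)*f(1,3) - f(1,2)*f(0,3)))"
  using det_mat_expand[of 3 f] by (simp add: det3[unfolded numeral_3_eq_3 numeral_2_eq_2] insert_index_def numeral_3_eq_3 numeral_2_eq_2 eval_nat_numeral algebra_simps)

lemma sum_split2: fixes g :: "nat \<Rightarrow> 'a::comm_monoid_add" shows "(\<Sum>j<n+2. g j) = g 0 + g 1 + (\<Sum>i<n. g (i+2))"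
  by (simp add: sum.lessThan_Suc_shift add.assoc del: sum.lessThan_Suc)

lemma sum_split1: fixes g :: "nat \<Rightarrow> 'a::comm_monoid_add" shows "(\<Sum>j<n+1. g j) = g 0 + (\<Sum>i<n. g (i+1))"
  by (simp add: sum.lessThan_Suc_shift del: sum.lessThan_Suc)

lemma sum4: fixes g :: "nat \<Rightarrow> 'a::comm_monoid_add" shows "(\<Sum>k\<in>{0..<4}. g k) = g 0 + g 1 + g 2 + (g 3 :: 'a::comm_monoid_add)"
  by (simp add: eval_nat_numeral add.assoc)

lemma sum3: fixes g :: "nat \<Rightarrow> 'a::comm_monoid_add" shows "(\<Sum>k\<in>{0..<3}. g k) = g 0 + g 1 + (g 2 :: 'a::comm_monoid_add)"
  by (simp add: eval_nat_numeral add.assoc)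

lemma sum4': fixes g :: "nat \<Rightarrow> 'a::comm_monoid_add" shows "(\<Sum>k<4. g k) = g 0 + g 1 + g 2 + (g 3 :: 'a::comm_monoid_add)"
  by (simp add: eval_nat_numeral add.assoc)

definition KC :: "nat \<Rightarrow> real \<Rightarrow> real \<Rightarrow> real \<Rightarrow> real list list" where
  "KC n u s q = [ [0, 1, real n, s], [1, 0, s, q], [1, 0, u * real n - u, u * s], [0, 1, 0, - u] ]"

definition ufC :: "(nat \<Rightarrow> real) \<Rightarrow> nat \<Rightarrow> nat \<Rightarrow> real" where
  "ufC v i k = (if k = 0 then (if i = 0 then 1 else 0)
      else if k = 1 then (if i = 1 then 1 else 0) else if k = 2 then (if 2 \<le> i then 1 else 0)
      else (if 2 \<le> i then v (i-1) else 0))"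

definition vfC :: "real \<Rightarrow> (nat \<Rightarrow> real) \<Rightarrow> nat \<Rightarrow> nat \<Rightarrow> real" where
  "vfC u v k j = (if k = 0 then (if j = 0 then u else 1)
      else if k = 1 then (if j = 0 then 1 else if j = 1 then u else v (j-1))
      else if k = 2 then (if j = 0 then 1 else if j = 1 then 0 else u)
      else (if j = 1 then 1 else 0))"

lemma cm_part:
  fixes A :: "nat \<Rightarrow> 'a::euclidean_space" and n :: nat and u :: real and v :: "nat \<Rightarrow> real"
  assumes dd: "\<And>i j. i \<le> n \<Longrightarrow> j \<le> n \<Longrightarrow> (dist (A i) (A j))^2 =
      (if i = j then 0 else if i = 0 then v j else if j = 0 then v i else u)"
  shows "cm_matrix n A = (-u) \<cdot>\<^sub>m 1\<^sub>m (n+2) + Matrix.mat (n+2) 4 (\<lambda>(i,k). ufC v i k) * Matrix.mat 4 (n+2) (\<lambda>(k,j). vfC u v k j)"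
proof (rule eq_matI)
  fix i j assume i: "i < dim_row ((-u) \<cdot>\<^sub>m 1\<^sub>m (n+2) + Matrix.mat (n+2) 4 (\<lambda>(i,k). ufC v i k) * Matrix.mat 4 (n+2) (\<lambda>(k,j). vfC u v k j))"
    and j: "j < dim_col ((-u) \<cdot>\<^sub>m 1\<^sub>m (n+2) + Matrix.mat (n+2) 4 (\<lambda>(i,k). ufC v i k) * Matrix.mat 4 (n+2) (\<lambda>(k,j). vfC u v k j))"
  have i': "i < n+2" and j': "j < n+2" using i j by auto
  show "cm_matrix n A $$ (i, j) = ((-u) \<cdot>\<^sub>m 1\<^sub>m (n+2) + Matrix.mat (n+2) 4 (\<lambda>(i,k). ufC v i k) * Matrix.mat 4 (n+2) (\<lambda>(k,j). vfC u v k j)) $$ (i, j)"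
    using i' j' dd[of "i-1" "j-1"]
    by (auto simp: cm_matrix_def ufC_def vfC_def scalar_prod_def sum4)
qed (auto simp: cm_matrix_def)

lemma cm_part2:
  fixes n :: nat and u :: real and v :: "nat \<Rightarrow> real"
  defines "U \<equiv> Matrix.mat (n+2) 4 (\<lambda>(i,k). ufC v i k)"
    and "V \<equiv> Matrix.mat 4 (n+2) (\<lambda>(k,j). vfC u v k j)"
    and "s \<equiv> (\<Sum>i<n. v (Suc i))" and "q \<equiv> (\<Sum>i<n. v (Suc i) * v (Suc i))"
  shows "(-u) \<cdot>\<^sub>m 1\<^sub>m 4 + V * U = Matrix.mat 4 4 (\<lambda>(k,l). KC n u s q ! k ! l)"
proof (rule eq_matI)
  fix k l assume k: "k < dim_row (Matrix.mat 4 4 (\<lambda>(k,l). KC n u s q ! k ! l))"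
    and l: "l < dim_col (Matrix.mat 4 4 (\<lambda>(k,l). KC n u s q ! k ! l))"
  have k4: "k = 0 \<or> k = 1 \<or> k = 2 \<or> k = 3" and l4: "l = 0 \<or> l = 1 \<or> l = 2 \<or> l = 3"
    using k l by auto
  have "(V * U) $$ (k,l) = (\<Sum>j\<in>{0..<n+2}. vfC u v k j * ufC v j l)"
    using k l by (simp add: U_def V_def scalar_prod_def)
  also have "\<dots> = vfC u v k 0 * ufC v 0 l + vfC u v k 1 * ufC v 1 l + (\<Sum>i<n. vfC u v k (i+2) * ufC v (i+2) l)"
    by (simp only: atLeast0LessThan sum_split2)
  finally have e: "(V * U) $$ (k,l) = vfC u v k 0 * ufC v 0 l + vfC u v k 1 * ufC v 1 l + (\<Sum>i<n. vfC u v k (i+2) * ufC v (i+2) l)" .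
  have ee: "((-u) \<cdot>\<^sub>m 1\<^sub>m 4 + V * U) $$ (k, l) = (-u) * (if k = l then 1 else 0) + (V * U) $$ (k,l)"
    using k l by (simp add: U_def V_def)
  show "((-u) \<cdot>\<^sub>m 1\<^sub>m 4 + V * U) $$ (k, l) = Matrix.mat 4 4 (\<lambda>(k,l). KC n u s q ! k ! l) $$ (k,l)"
    unfolding ee e using k l k4 l4
    by (auto simp: KC_def ufC_def vfC_def s_def q_def sum_distrib_left)
qed (auto simp: U_def V_def)

definition ufD :: "(nat \<Rightarrow> real) \<Rightarrow> nat \<Rightarrow> nat \<Rightarrow> real" where
  "ufD v i k = (if k = 0 then (if i = 0 then 1 else 0)
      else if k = 1 then (if 1 \<le> i then v i else 0) else (if 1 \<le> i then 1 else 0))"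

definition vfD :: "real \<Rightarrow> (nat \<Rightarrow> real) \<Rightarrow> nat \<Rightarrow> nat \<Rightarrow> real" where
  "vfD u v k j = (if k = 0 then (if j = 0 then u else v j)
      else if k = 1 then (if j = 0 then 1 else 0)
      else (if j = 0 then 0 else u))"

definition KD :: "nat \<Rightarrow> real \<Rightarrow> real \<Rightarrow> real \<Rightarrow> real list list" where
  "KD n u s q = [ [0, q, s], [1, - u, 0], [0, u * s, u * real n - u] ]"

lemma d_part:
  fixes A :: "nat \<Rightarrow> 'a::euclidean_space" and n :: nat and u :: real and v :: "nat \<Rightarrow> real"
  assumes dd: "\<And>i j. i \<le> n \<Longrightarrow> j \<le> n \<Longrightarrow> (dist (A i) (A j))^2 =
      (if i = j then 0 else if i = 0 then v j else if j = 0 then v i else u)"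
  defines "U \<equiv> Matrix.mat (n+1) 3 (\<lambda>(i,k). ufD v i k)"
    and "V \<equiv> Matrix.mat 3 (n+1) (\<lambda>(k,j). vfD u v k j)"
  shows "inner_cm_matrix n A = (-u) \<cdot>\<^sub>m 1\<^sub>m (n+1) + U * V"
proof (rule eq_matI)
  fix i j assume i: "i < dim_row ((-u) \<cdot>\<^sub>m 1\<^sub>m (n+1) + U * V)" and j: "j < dim_col ((-u) \<cdot>\<^sub>m 1\<^sub>m (n+1) + U * V)"
  have i': "i < n+1" and j': "j < n+1" using i j by (auto simp: U_def V_def)
  show "inner_cm_matrix n A $$ (i, j) = ((-u) \<cdot>\<^sub>m 1\<^sub>m (n+1) + U * V) $$ (i, j)"
    using i' j' dd[of i j]
    by (auto simp: inner_cm_matrix_def U_def V_def ufD_def vfD_def scalar_prod_def sum3)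
qed (auto simp: inner_cm_matrix_def U_def V_def)

lemma d_part2:
  fixes n :: nat and u :: real and v :: "nat \<Rightarrow> real"
  defines "U \<equiv> Matrix.mat (n+1) 3 (\<lambda>(i,k). ufD v i k)"
    and "V \<equiv> Matrix.mat 3 (n+1) (\<lambda>(k,j). vfD u v k j)"
    and "s \<equiv> (\<Sum>i<n. v (Suc i))" and "q \<equiv> (\<Sum>i<n. v (Suc i) * v (Suc i))"
  shows "(-u) \<cdot>\<^sub>m 1\<^sub>m 3 + V * U = Matrix.mat 3 3 (\<lambda>(k,l). KD n u s q ! k ! l)"
proof (rule eq_matI)
  fix k l assume k: "k < dim_row (Matrix.mat 3 3 (\<lambda>(k,l). KD n u s q ! k ! l))"
    and l: "l < dim_col (Matrix.mat 3 3 (\<lambda>(k,l). KD n u s q ! k ! l))"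
  have k4: "k = 0 \<or> k = 1 \<or> k = 2" and l4: "l = 0 \<or> l = 1 \<or> l = 2"
    using k l by auto
  have "(V * U) $$ (k,l) = (\<Sum>j\<in>{0..<n+1}. vfD u v k j * ufD v j l)"
    using k l by (simp add: U_def V_def scalar_prod_def)
  also have "\<dots> = vfD u v k 0 * ufD v 0 l + (\<Sum>i<n. vfD u v k (i+1) * ufD v (i+1) l)"
    by (simp only: atLeast0LessThan sum_split1)
  finally have e: "(V * U) $$ (k,l) = vfD u v k 0 * ufD v 0 l + (\<Sum>i<n. vfD u v k (i+1) * ufD v (i+1) l)" .
  have ee: "((-u) \<cdot>\<^sub>m 1\<^sub>m 3 + V * U) $$ (k, l) = (-u) * (if k = l then 1 else 0) + (V * U) $$ (k,l)"
    using k l by (simp add: U_def V_def)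
  show "((-u) \<cdot>\<^sub>m 1\<^sub>m 3 + V * U) $$ (k, l) = Matrix.mat 3 3 (\<lambda>(k,l). KD n u s q ! k ! l) $$ (k,l)"
    unfolding ee e using k l k4 l4
    by (auto simp: KD_def ufD_def vfD_def s_def q_def sum_distrib_left)
qed (auto simp: U_def V_def)

lemma dd_lemma:
  fixes A :: "nat \<Rightarrow> 'a::euclidean_space" and n :: nat and u :: real and v :: "nat \<Rightarrow> real"
  assumes v: "\<And>i. 1 \<le> i \<Longrightarrow> i \<le> n \<Longrightarrow> (dist (A i) (A 0))^2 = v i"
    and uu: "\<And>i j. 1 \<le> i \<Longrightarrow> i < j \<Longrightarrow> j \<le> n \<Longrightarrow> (dist (A i) (A j))^2 = u"
  shows "\<And>i j. i \<le> n \<Longrightarrow> j \<le> n \<Longrightarrow> (dist (A i) (A j))^2 =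
      (if i = j then 0 else if i = 0 then v j else if j = 0 then v i else u)"
proof -
  fix i j assume i: "i \<le> n" and j: "j \<le> n"
  show "(dist (A i) (A j))^2 = (if i = j then 0 else if i = 0 then v j else if j = 0 then v i else u)"
  proof (cases "i = j")
    case False
    show ?thesis
    proof (cases "i = 0")
      case True with False j v[of j] show ?thesis by (simp add: dist_commute)
    next
      case i0: False
      show ?thesis
      proof (cases "j = 0")
        case True with i0 i v[of i] show ?thesis by simp
      next
        case j0: False
        show ?thesis
        proof (cases "i < j")
          case True with i0 j0 j uu[of i j] show ?thesis by simp
        next
          case False with \<open>i \<noteq> j\<close> i0 j0 i uu[of j i] show ?thesis by (simp add: dist_commute)
        qed
      qed
    qed
  qed simp
qed

theorem theorem4p1:
  fixes A :: "nat \<Rightarrow> 'a::euclidean_space" and n :: nat and u :: real and v :: "nat \<Rightarrow> real"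
  assumes "n \<ge> 3" and "u > 0"
    and "is_simplex n A"
    and "\<And>i. 1 \<le> i \<Longrightarrow> i \<le> n \<Longrightarrow> (dist (A i) (A 0))^2 = v i"
    and "\<And>i j. 1 \<le> i \<Longrightarrow> i < j \<Longrightarrow> j \<le> n \<Longrightarrow> (dist (A i) (A j))^2 = u"
  shows "cayley_menger n A =
           (-u)^(n-2) * (real n * (u^2 + (\<Sum>i=1..n. (v i)^2)) - (u + (\<Sum>i=1..n. v i))^2)
         \<and> inner_cayley_menger n A =
           (-u)^(n-1) * ((real n - 1) * (\<Sum>i=1..n. (v i)^2) - (\<Sum>i=1..n. v i)^2)"
proof -
  note dd = dd_lemma[of n A v u, OF assms(4,5)]
  define s where "s = (\<Sum>i<n. v (Suc i))"
  define q where "q = (\<Sum>i<n. v (Suc i) * v (Suc i))"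
  have s': "(\<Sum>i=1..n. v i) = s" unfolding s_def by (simp add: sum.atLeast1_atMost_eq)
  have q': "(\<Sum>i=1..n. (v i)^2) = q" unfolding q_def by (simp add: sum.atLeast1_atMost_eq power2_eq_square)
  have u0: "- u \<noteq> 0" using assms(2) by simp
  define UC where "UC = Matrix.mat (n+2) 4 (\<lambda>(i,k). ufC v i k)"
  define VC where "VC = Matrix.mat 4 (n+2) (\<lambda>(k,j). vfC u v k j)"
  have "cayley_menger n A = det ((-u) \<cdot>\<^sub>m 1\<^sub>m (n+2) + UC * VC)"
    unfolding cayley_menger_def UC_def VC_def using cm_part[OF dd] by simp
  also have "\<dots> = (-u)^(n+2-4) * det ((-u) \<cdot>\<^sub>m 1\<^sub>m 4 + VC * UC)"
    by (rule sylvester_det) (use assms(1) u0 in \<open>auto simp: UC_def VC_def\<close>)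
  also have "(-u) \<cdot>\<^sub>m 1\<^sub>m 4 + VC * UC = Matrix.mat 4 4 (\<lambda>(k,l). KC n u s q ! k ! l)"
    unfolding UC_def VC_def s_def q_def by (rule cm_part2)
  also have "det (Matrix.mat 4 4 (\<lambda>(k,l). KC n u s q ! k ! l)) = real n * (u^2 + q) - (u + s)^2"
    by (simp add: det4 KC_def power2_eq_square algebra_simps)
  finally have C: "cayley_menger n A = (-u)^(n-2) * (real n * (u^2 + q) - (u + s)^2)"
    by simp
  define UD where "UD = Matrix.mat (n+1) 3 (\<lambda>(i,k). ufD v i k)"
  define VD where "VD = Matrix.mat 3 (n+1) (\<lambda>(k,j). vfD u v k j)"
  have "inner_cayley_menger n A = det ((-u) \<cdot>\<^sub>m 1\<^sub>m (n+1) + UD * VD)"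
    unfolding inner_cayley_menger_def UD_def VD_def using d_part[OF dd] by simp
  also have "\<dots> = (-u)^(n+1-3) * det ((-u) \<cdot>\<^sub>m 1\<^sub>m 3 + VD * UD)"
    by (rule sylvester_det) (use assms(1) u0 in \<open>auto simp: UD_def VD_def\<close>)
  also have "(-u) \<cdot>\<^sub>m 1\<^sub>m 3 + VD * UD = Matrix.mat 3 3 (\<lambda>(k,l). KD n u s q ! k ! l)"
    unfolding UD_def VD_def s_def q_def by (rule d_part2)
  also have "det (Matrix.mat 3 3 (\<lambda>(k,l). KD n u s q ! k ! l)) = (-u) * ((real n - 1) * q - s^2)"
    by (simp add: det3 KD_def power2_eq_square algebra_simps)
  finally have D: "inner_cayley_menger n A = (-u)^(n-2) * ((-u) * ((real n - 1) * q - s^2))"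
    by simp
  have "(-u)^(n-1) = (-u)^(n-2) * (-u)"
  proof -
    obtain m where m: "n = m + 3" using assms(1) by (metis add.commute le_add_diff_inverse)
    show ?thesis unfolding m by (simp add: eval_nat_numeral)
  qed
  then have D': "inner_cayley_menger n A = (-u)^(n-1) * ((real n - 1) * q - s^2)"
    using D by simp
  show ?thesis unfolding s' q' using C D' by simp
qed

end
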